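(* If $E$ and $F$ are non-degenerated $C$-pseudo-cones with $E=z_1+\mathbb{A}_1$ and $F=z_2+\mathbb{A}_2$ ($z_i\in C$, $\mathbb{A}_i$ $C$-asymptotic sets), then $E+F=(z_1+z_2)+(\mathbb{A}_1+\mathbb{A}_2)$ is a non-degenerated $C$-pseudo-cone with $C$-starting point $z_1+z_2$.
   Context: $C\subset\mathbb{R}^n$ ($n\ge2$) is a pointed closed convex cone with nonempty interior. A $C$-pseudo-cone is a nonempty closed convex set $E$ with $o\notin E$, $\lambda x\in E$ for all $x\in E,\lambda\ge1$, and recession cone equal to $C$. A $C$-asymptotic set is an unbounded closed convex set $\mathbb{A}\subset C$ with nonempty interior and $o\notin\mathbb{A}$ such that $\lim_{x\in\partial\mathbb{A},|x|\to\infty}d(x,\partial C)=0$. A non-degenerated $C$-pseudo-cone is a $C$-pseudo-cone $E$ that can be written as $E=z+\mathbb{A}$ with $z\in C$ and $\mathbb{A}$ a $C$-asymptotic set (this decomposition is unique); $z$ is called its $C$-starting point. *)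

theory Defs
  imports "HOL-Analysis.Analysis"
begin

definition pointed_cone :: "'a::euclidean_space set \<Rightarrow> bool" where
  "pointed_cone C \<longleftrightarrow> convex_cone C \<and> closed C \<and> interior C \<noteq> {} \<and>
     C \<inter> uminus ` C = {0}"

definition minkowski_sum :: "'a::real_vector set \<Rightarrow> 'a set \<Rightarrow> 'a set" where
  "minkowski_sum A B = {x + y | x y. x \<in> A \<and> y \<in> B}"

definition translate :: "'a::real_vector \<Rightarrow> 'a set \<Rightarrow> 'a set" where
  "translate z A = (\<lambda>x. z + x) ` A"

definition rec_cone :: "'a::real_vector set \<Rightarrow> 'a set" where
  "rec_cone E = {y. \<forall>x\<in>E. \<forall>t::real. t \<ge> 0 \<longrightarrow> x + t *\<^sub>R y \<in> E}"

definition pseudo_cone :: "'a::euclidean_space set \<Rightarrow> 'a set \<Rightarrow> bool" where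
  "pseudo_cone C E \<longleftrightarrow> E \<noteq> {} \<and> closed E \<and> convex E \<and> 0 \<notin> E \<and>
     (\<forall>x\<in>E. \<forall>l::real. l \<ge> 1 \<longrightarrow> l *\<^sub>R x \<in> E) \<and> rec_cone E = C"

definition asymptotic_set :: "'a::euclidean_space set \<Rightarrow> 'a set \<Rightarrow> bool" where
  "asymptotic_set C A \<longleftrightarrow> \<not> bounded A \<and> closed A \<and> convex A \<and> A \<subseteq> C \<and>
     interior A \<noteq> {} \<and> 0 \<notin> A \<and>
     (\<forall>\<epsilon>>0. \<exists>R. \<forall>x\<in>frontier A. norm x \<ge> R \<longrightarrow> infdist x (frontier C) < \<epsilon>)"

definition nondeg_pseudo_cone :: "'a::euclidean_space set \<Rightarrow> 'a set \<Rightarrow> bool" where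
  "nondeg_pseudo_cone C E \<longleftrightarrow> pseudo_cone C E \<and>
     (\<exists>z A. z \<in> C \<and> asymptotic_set C A \<and> E = translate z A)"

definition starting_point :: "'a::euclidean_space set \<Rightarrow> 'a set \<Rightarrow> 'a" where
  "starting_point C E = (THE z. z \<in> C \<and> (\<exists>A. asymptotic_set C A \<and> E = translate z A))"

end

theory Submission
  imports Defs
begin


lemma pc_basic:
  assumes "pointed_cone C"
  shows "closed C" "convex C" "0 \<in> C" "interior C \<noteq> {}"
    "\<And>x y. x\<in>C \<Longrightarrow> y\<in>C \<Longrightarrow> x+y\<in>C"
    "\<And>x t. x\<in>C \<Longrightarrow> 0\<le>t \<Longrightarrow> t*\<^sub>R x \<in> C"
    "\<And>x. x\<in>C \<Longrightarrow> -x\<in>C \<Longrightarrow> x=0"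
proof -
  have cc: "convex_cone C" "closed C" "interior C \<noteq> {}" "C \<inter> uminus ` C = {0}"
    using assms unfolding pointed_cone_def by auto
  show "closed C" "interior C \<noteq> {}" using cc by auto
  show "convex C" using cc(1) unfolding convex_cone_def by auto
  show sc: "\<And>x t. x\<in>C \<Longrightarrow> 0\<le>t \<Longrightarrow> t*\<^sub>R x \<in> C"
    using cc(1) unfolding convex_cone_def conic_def by auto
  show "0 \<in> C" using cc(4) by auto
  show "\<And>x y. x\<in>C \<Longrightarrow> y\<in>C \<Longrightarrow> x+y\<in>C" using cc(1) convex_cone_add by blast
  show "\<And>x. x\<in>C \<Longrightarrow> -x\<in>C \<Longrightarrow> x=0"
  proof -
    fix x assume "x \<in> C" "-x \<in> C"
    then have "-x \<in> C \<inter> uminus ` C" by (metis IntI image_eqI)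
    then show "x = 0" using cc(4) by auto
  qed
qed

lemma frontier_C_ne:
  fixes C :: "'a::euclidean_space set"
  assumes "pointed_cone C" shows "frontier C \<noteq> {}"
proof -
  obtain b :: 'a where b: "b \<in> Basis" using SOME_Basis by blast
  have "b \<noteq> 0" using b nonzero_Basis by blast
  then have "C \<noteq> UNIV" using pc_basic(7)[OF assms, of b] by auto
  moreover have "C \<noteq> {}" using pc_basic(3)[OF assms] by auto
  ultimately show ?thesis using frontier_not_empty by blast
qed

lemma ray_limit:
  fixes C :: "'a::euclidean_space set"
  assumes "pointed_cone C" and "\<And>t. t \<ge> 0 \<Longrightarrow> x + t *\<^sub>R d \<in> C"
  shows "d \<in> C"
proof -
  let ?f = "\<lambda>k::nat. inverse (real (Suc k)) *\<^sub>R x + d"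
  have fC: "?f k \<in> C" for k
  proof -
    have "?f k = inverse (real (Suc k)) *\<^sub>R (x + real (Suc k) *\<^sub>R d)"
      by (simp add: scaleR_add_right)
    then show ?thesis using pc_basic(6)[OF assms(1)] assms(2)[of "real (Suc k)"] by simp
  qed
  have "?f \<longlonglongrightarrow> 0 *\<^sub>R x + d"
    by (intro tendsto_intros LIMSEQ_inverse_real_of_nat)
  then have fl: "?f \<longlonglongrightarrow> d" by simp
  show ?thesis by (rule closed_sequentially[OF pc_basic(1)[OF assms(1)] _ fl]) (use fC in blast)
qed

lemma ball_infdist:
  fixes C :: "'a::euclidean_space set"
  assumes "pointed_cone C" "ball p e \<subseteq> C" "0 < e"
  shows "e \<le> infdist p (frontier C)"
proof -
  have "e \<le> dist p f" if "f \<in> frontier C" for f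
  proof (rule ccontr)
    assume "\<not> e \<le> dist p f"
    then have "f \<in> ball p e" by simp
    then have "f \<in> interior C" using assms(2) interior_maximal open_ball by blast
    then show False using that by (simp add: frontier_def)
  qed
  then show ?thesis using frontier_C_ne[OF assms(1)]
    by (simp add: infdist_notempty cINF_greatest)
qed

lemma infdist_ball:
  fixes C :: "'a::euclidean_space set"
  assumes "pointed_cone C" "x \<in> C" "e \<le> infdist x (frontier C)"
  shows "ball x e \<subseteq> C"
proof (rule ccontr)
  assume "\<not> ball x e \<subseteq> C"
  then have "ball x e - C \<noteq> {}" by auto
  moreover have "0 < e" using \<open>\<not> ball x e \<subseteq> C\<close> by (metis ball_eq_empty empty_subsetI not_less)
  then have "ball x e \<inter> C \<noteq> {}"
    using assms(2) centre_in_ball by blast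
  ultimately obtain f where f: "f \<in> ball x e" "f \<in> frontier C"
    using connected_Int_frontier[OF connected_ball] by blast
  then have "infdist x (frontier C) \<le> dist x f" by (simp add: infdist_le)
  with f assms(3) show False by simp
qed



lemma ball_scale_in:
  fixes C :: "'a::euclidean_space set"
  assumes pc: "pointed_cone C" and b: "ball y e \<subseteq> C" and s: "1 \<le> s"
  shows "ball (s *\<^sub>R y) e \<subseteq> C"
proof
  fix q assume q: "q \<in> ball (s *\<^sub>R y) e"
  have sp: "0 < s" using s by simp
  have "dist y (inverse s *\<^sub>R q) = inverse s * dist (s *\<^sub>R y) q"
  proof -
    have "y - inverse s *\<^sub>R q = inverse s *\<^sub>R (s *\<^sub>R y - q)"
      using sp by (simp add: algebra_simps)
    then show ?thesis using sp by (simp add: dist_norm)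
  qed
  also have "\<dots> \<le> dist (s *\<^sub>R y) q" using s by (simp add: mult_le_cancel_right1 field_simps)
  also have "\<dots> < e" using q by simp
  finally have "inverse s *\<^sub>R q \<in> C" using b by auto
  from pc_basic(6)[OF pc this, of s] sp have "s *\<^sub>R (inverse s *\<^sub>R q) \<in> C" by simp
  moreover have "s *\<^sub>R (inverse s *\<^sub>R q) = q" using sp by simp
  ultimately show "q \<in> C" by simp
qed

lemma deep_in:
  fixes C A :: "'a::euclidean_space set"
  assumes pc: "pointed_cone C" and as: "asymptotic_set C A"
    and ad: "\<forall>a\<in>A. \<forall>c\<in>C. a + c \<in> A" and e: "0 < \<epsilon>"
  shows "\<exists>R. \<forall>y. R \<le> norm y \<longrightarrow> ball y \<epsilon> \<subseteq> C \<longrightarrow> y \<in> A"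
proof -
  obtain R0 where R0: "\<forall>x\<in>frontier A. norm x \<ge> R0 \<longrightarrow> infdist x (frontier C) < \<epsilon>"
    using as e unfolding asymptotic_set_def by blast
  have "A \<noteq> {}" using as unfolding asymptotic_set_def by auto
  then obtain a where a: "a \<in> A" by blast
  show ?thesis
  proof (rule exI[of _ "max R0 1"], intro allI impI)
    fix y assume ny: "max R0 1 \<le> norm y" and hb: "ball y \<epsilon> \<subseteq> C"
    show "y \<in> A"
    proof (rule ccontr)
      assume yA: "y \<notin> A"
      define T where "T = norm a / \<epsilon> + 1"
      have T1: "1 \<le> T" using e by (simp add: T_def)
      have Tp: "0 < T" using T1 by simp
      have "dist y (y - inverse T *\<^sub>R a) < \<epsilon>"
      proof -
        have "dist y (y - inverse T *\<^sub>R a) = norm a / T" using Tp by (simp add: dist_norm divide_inverse mult.commute)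
        also have "\<dots> < \<epsilon>" using e Tp by (simp add: T_def field_simps)
        finally show ?thesis .
      qed
      then have "y - inverse T *\<^sub>R a \<in> C" using hb by auto
      then have "T *\<^sub>R (y - inverse T *\<^sub>R a) \<in> C" using pc_basic(6)[OF pc] Tp by simp
      then have "T *\<^sub>R y - a \<in> C" using Tp by (simp add: algebra_simps)
      then have "a + (T *\<^sub>R y - a) \<in> A" using ad a by blast
      then have TA: "T *\<^sub>R y \<in> A" by simp
      have "closed_segment y (T *\<^sub>R y) \<inter> A \<noteq> {}" using TA by auto
      moreover have "closed_segment y (T *\<^sub>R y) - A \<noteq> {}" using yA by auto
      ultimately obtain p where p: "p \<in> closed_segment y (T *\<^sub>R y)" "p \<in> frontier A"
        using connected_Int_frontier[OF connected_segment] by blast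
      then obtain u where u: "0 \<le> u" "u \<le> 1" "p = (1 - u) *\<^sub>R y + u *\<^sub>R (T *\<^sub>R y)"
        unfolding closed_segment_def by blast
      define s where "s = 1 - u + u * T"
      have "0 \<le> u * (T - 1)" using u T1 by simp
      then have s1: "1 \<le> s" by (simp add: s_def algebra_simps)
      have ps: "p = s *\<^sub>R y" using u by (simp add: s_def algebra_simps)
      have "norm p = s * norm y" using ps s1 by simp
      also have "\<dots> \<ge> norm y" using s1 by (simp add: mult_le_cancel_right1)
      finally have "R0 \<le> norm p" using ny by simp
      then have lt: "infdist p (frontier C) < \<epsilon>" using R0 p(2) by blast
      have bp: "ball p \<epsilon> \<subseteq> C" using ball_scale_in[OF pc hb s1] ps by simp
      have "\<epsilon> \<le> infdist p (frontier C)" using ball_infdist[OF pc bp e] .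
      with lt show False by simp
    qed
  qed
qed



lemma sum_bound:
  fixes C :: "'a::euclidean_space set"
  assumes pc: "pointed_cone C"
  shows "\<exists>m>0. \<forall>a\<in>C. \<forall>b\<in>C. m * norm a \<le> norm (a + b)"
proof (cases "C \<inter> sphere 0 1 = {}")
  case True
  have "a = 0" if "a \<in> C" for a
  proof (rule ccontr)
    assume "a \<noteq> 0"
    then have "inverse (norm a) *\<^sub>R a \<in> C \<inter> sphere 0 1"
      using pc_basic(6)[OF pc that, of "inverse (norm a)"] by simp
    with True show False by blast
  qed
  then have "\<forall>a\<in>C. \<forall>b\<in>C. 1 * norm a \<le> norm (a + b)" by (metis mult_1 norm_ge_zero norm_zero)
  then show ?thesis by (intro exI[of _ 1]) simp
next
  case False
  define K where "K = (C \<inter> sphere 0 1) \<times> (C \<inter> cball 0 2)"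
  have cK: "compact K" unfolding K_def
    using pc_basic(1)[OF pc]
    by (intro compact_Times closed_Int_compact compact_sphere compact_cball)
  have Kne: "K \<noteq> {}" using False pc_basic(3)[OF pc] unfolding K_def by auto
  have cont: "continuous_on K (\<lambda>z. norm (fst z + snd z))"
    by (intro continuous_intros)
  obtain z0 where z0: "z0 \<in> K" "\<And>z. z \<in> K \<Longrightarrow> norm (fst z0 + snd z0) \<le> norm (fst z + snd z)"
    using continuous_attains_inf[OF cK Kne cont] by blast
  define m where "m = min 1 (norm (fst z0 + snd z0))"
  have mpos: "0 < m"
  proof -
    have "fst z0 + snd z0 \<noteq> 0"
    proof
      assume h: "fst z0 + snd z0 = 0"
      have "fst z0 \<in> C" "snd z0 \<in> C" "norm (fst z0) = 1" using z0(1) unfolding K_def by auto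
      moreover have "- fst z0 = snd z0" using h by (simp add: add_eq_0_iff)
      ultimately show False using pc_basic(7)[OF pc, of "fst z0"] by auto
    qed
    then show ?thesis by (simp add: m_def)
  qed
  have "m * norm a \<le> norm (a + b)" if a: "a \<in> C" and b: "b \<in> C" for a b
  proof (cases "a = 0")
    case True then show ?thesis by simp
  next
    case False
    define s where "s = inverse (norm a)"
    have sp: "0 < s" using False by (simp add: s_def)
    have a1: "s *\<^sub>R a \<in> C \<inter> sphere 0 1" using pc_basic(6)[OF pc a, of s] sp False by (simp add: s_def)
    have bC: "s *\<^sub>R b \<in> C" using pc_basic(6)[OF pc b, of s] sp by simp
    have "m \<le> norm (s *\<^sub>R a + s *\<^sub>R b)"
    proof (cases "norm (s *\<^sub>R b) \<le> 2")
      case True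
      then have "(s *\<^sub>R a, s *\<^sub>R b) \<in> K" using a1 bC unfolding K_def by auto
      from z0(2)[OF this] have "norm (fst z0 + snd z0) \<le> norm (s *\<^sub>R a + s *\<^sub>R b)" by simp
      then show ?thesis by (simp add: m_def)
    next
      case F: False
      have "norm (s *\<^sub>R b) - norm (s *\<^sub>R a) \<le> norm (s *\<^sub>R a + s *\<^sub>R b)"
        using norm_diff_ineq[of "s *\<^sub>R b" "s *\<^sub>R a"] by (simp add: add.commute)
      moreover have "norm (s *\<^sub>R a) = 1" using a1 by simp
      ultimately show ?thesis using F by (simp add: m_def)
    qed
    also have "\<dots> = s * norm (a + b)" using sp by (simp flip: scaleR_add_right)
    finally have "m \<le> s * norm (a + b)" .
    then have "m * norm a \<le> s * norm (a + b) * norm a" using False by simp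
    also have "\<dots> = norm (a + b)" using False by (simp add: s_def)
    finally show ?thesis .
  qed
  then show ?thesis using mpos by blast
qed



lemma closed_msum:
  fixes C A B :: "'a::euclidean_space set"
  assumes pc: "pointed_cone C" and cA: "closed A" and cB: "closed B"
    and AC: "A \<subseteq> C" and BC: "B \<subseteq> C"
  shows "closed (minkowski_sum A B)"
proof -
  obtain m where m: "0 < m" "\<And>a b. a\<in>C \<Longrightarrow> b\<in>C \<Longrightarrow> m * norm a \<le> norm (a + b)"
    using sum_bound[OF pc] by blast
  have "x \<in> minkowski_sum A B" if ap: "\<forall>e>0. \<exists>y\<in>minkowski_sum A B. dist y x < e" for x
  proof -
    define r where "r = (norm x + 1) / m"
    define K where "K = {a + b | a b. a \<in> A \<inter> cball 0 r \<and> b \<in> B \<inter> cball 0 (r + norm x + 1)}"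
    have "compact K" unfolding K_def
      using cA cB by (intro compact_sums) (auto intro: closed_Int_compact)
    then have cK: "closed K" by (rule compact_imp_closed)
    have "\<exists>y\<in>K. dist y x < e" if e: "e > 0" for e
    proof -
      obtain y where y: "y \<in> minkowski_sum A B" "dist y x < min e 1"
        using ap e by (meson less_numeral_extra(1) min_less_iff_conj)
      then obtain a b where ab: "a \<in> A" "b \<in> B" "y = a + b" unfolding minkowski_sum_def by blast
      have ny: "norm y \<le> norm x + 1" using y(2) norm_triangle_ineq2[of y x] by (simp add: dist_norm)
      have "m * norm a \<le> norm y" using m(2)[of a b] ab AC BC by auto
      then have na: "norm a \<le> r" using ny m(1) by (simp add: r_def field_simps)
      have "norm b \<le> norm y + norm a" using ab norm_triangle_ineq4[of y a] by simp
      then have "norm b \<le> r + norm x + 1" using na ny by simp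
      then have "y \<in> K" using ab na unfolding K_def by auto
      then show ?thesis using y(2) by auto
    qed
    then have "x \<in> K" using closed_approachable[OF cK] by blast
    then show ?thesis unfolding K_def minkowski_sum_def by blast
  qed
  then have "closure (minkowski_sum A B) \<subseteq> minkowski_sum A B"
    by (auto simp: closure_approachable)
  then show ?thesis using closure_subset_eq by blast
qed



lemma int_ball:
  fixes C :: "'a::euclidean_space set"
  assumes pc: "pointed_cone C"
  obtains u \<rho> where "0 < \<rho>" "ball u \<rho> \<subseteq> C"
proof -
  obtain u where "u \<in> interior C" using pc_basic(4)[OF pc] by blast
  then obtain \<rho> where "0 < \<rho>" "ball u \<rho> \<subseteq> C" using mem_interior by blast
  then show ?thesis using that by blast
qed

lemma cone_ball:
  fixes C :: "'a::euclidean_space set"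
  assumes pc: "pointed_cone C" and b: "ball u \<rho> \<subseteq> C" and c: "c \<in> C" and mu: "0 < \<mu>"
  shows "ball (c + \<mu> *\<^sub>R u) (\<mu> * \<rho>) \<subseteq> C"
proof
  fix q assume q: "q \<in> ball (c + \<mu> *\<^sub>R u) (\<mu> * \<rho>)"
  define w where "w = u + inverse \<mu> *\<^sub>R (q - c - \<mu> *\<^sub>R u)"
  have "dist u w = inverse \<mu> * norm (q - c - \<mu> *\<^sub>R u)" using mu by (simp add: w_def dist_norm)
  also have "norm (q - c - \<mu> *\<^sub>R u) = dist (c + \<mu> *\<^sub>R u) q"
    by (simp add: dist_norm norm_minus_commute algebra_simps)
  finally have "dist u w = inverse \<mu> * dist (c + \<mu> *\<^sub>R u) q" .
  also have "\<dots> < inverse \<mu> * (\<mu> * \<rho>)" using q mu by simp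
  also have "\<dots> = \<rho>" using mu by simp
  finally have "w \<in> C" using b by auto
  then have "\<mu> *\<^sub>R w \<in> C" using pc_basic(6)[OF pc] mu by simp
  then have "c + \<mu> *\<^sub>R w \<in> C" using pc_basic(5)[OF pc c] by blast
  moreover have "c + \<mu> *\<^sub>R w = q" using mu by (simp add: w_def algebra_simps)
  ultimately show "q \<in> C" by simp
qed

lemma h_zero:
  fixes C A :: "'a::euclidean_space set"
  assumes pc: "pointed_cone C" and as: "asymptotic_set C A"
    and ad: "\<forall>a\<in>A. \<forall>c\<in>C. a + c \<in> A"
    and c0: "c0 \<in> C" "c0 \<noteq> 0" "n \<bullet> c0 = 0" and d: "0 < \<delta>"
  shows "\<exists>y\<in>A. n \<bullet> y < \<delta>"
proof -
  obtain u \<rho> where r: "0 < \<rho>" "ball u \<rho> \<subseteq> C" using int_ball[OF pc] by blast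
  define \<mu> where "\<mu> = \<delta> / (norm n * norm u + 1)"
  have mu: "0 < \<mu>" using d by (simp add: \<mu>_def add_nonneg_pos)
  have "\<mu> * (n \<bullet> u) \<le> \<mu> * (norm n * norm u)"
    using mu Cauchy_Schwarz_ineq2[of n u] by (intro mult_left_mono) auto
  also have "\<dots> < \<delta>"
  proof -
    have "\<mu> * (norm n * norm u) < \<mu> * (norm n * norm u + 1)" using mu by simp
    also have "\<dots> = \<delta>"
    proof -
      have "0 < norm n * norm u + 1" by (simp add: add_nonneg_pos)
      then show ?thesis by (simp add: \<mu>_def)
    qed
    finally show ?thesis .
  qed
  finally have mud: "\<mu> * (n \<bullet> u) < \<delta>" .
  obtain R where R: "\<forall>y. R \<le> norm y \<longrightarrow> ball y (\<mu> * \<rho>) \<subseteq> C \<longrightarrow> y \<in> A"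
    using deep_in[OF pc as ad] mu r(1) by (meson mult_pos_pos)
  define t where "t = (max R 0 + \<mu> * norm u) / norm c0"
  have t0: "0 \<le> t" using c0(2) mu by (simp add: t_def)
  define y where "y = t *\<^sub>R c0 + \<mu> *\<^sub>R u"
  have tc: "t *\<^sub>R c0 \<in> C" using pc_basic(6)[OF pc c0(1) t0] .
  have "ball y (\<mu> * \<rho>) \<subseteq> C" unfolding y_def using cone_ball[OF pc r(2) tc mu] .
  moreover have "R \<le> norm y"
  proof -
    have "norm (t *\<^sub>R c0) - norm (\<mu> *\<^sub>R u) \<le> norm y"
      unfolding y_def using norm_diff_ineq[of "t *\<^sub>R c0" "\<mu> *\<^sub>R u"] by simp
    moreover have "norm (t *\<^sub>R c0) = max R 0 + \<mu> * norm u"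
      using t0 c0(2) mu by (simp add: t_def)
    ultimately show ?thesis using mu by simp
  qed
  ultimately have yA: "y \<in> A" using R by blast
  have "n \<bullet> y = \<mu> * (n \<bullet> u)" using c0(3) by (simp add: y_def inner_add_right)
  then have "n \<bullet> y < \<delta>" using mud by simp
  then show ?thesis using yA by blast
qed

lemma far_min:
  fixes C A :: "'a::euclidean_space set"
  assumes pc: "pointed_cone C" and as: "asymptotic_set C A"
    and ad: "\<forall>a\<in>A. \<forall>c\<in>C. a + c \<in> A" and e: "0 < e"
  shows "\<exists>R. \<forall>x n a. norm n = 1 \<longrightarrow> a \<in> A \<longrightarrow> (\<forall>y\<in>A. n \<bullet> a \<le> n \<bullet> y) \<longrightarrow> e \<le> n \<bullet> a
     \<longrightarrow> R \<le> norm x \<longrightarrow> x \<in> C \<longrightarrow> n \<bullet> x \<le> B \<longrightarrow> False"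
proof -
  obtain u \<rho> where r: "0 < \<rho>" "ball u \<rho> \<subseteq> C" using int_ball[OF pc] by blast
  define \<mu> where "\<mu> = e / (2 * (norm u + 1))"
  have mu: "0 < \<mu>" using e by (simp add: \<mu>_def add_nonneg_pos)
  have mue: "\<mu> * norm u < e / 2"
  proof -
    have "\<mu> * norm u < \<mu> * (norm u + 1)" using mu by simp
    also have "\<dots> = e / 2"
    proof -
      have "0 < norm u + 1" by (simp add: add_nonneg_pos)
      then show ?thesis by (simp add: \<mu>_def field_simps)
    qed
    finally show ?thesis .
  qed
  obtain R' where R': "\<forall>y. R' \<le> norm y \<longrightarrow> ball y (\<mu> * \<rho>) \<subseteq> C \<longrightarrow> y \<in> A"
    using deep_in[OF pc as ad] mu r(1) by (meson mult_pos_pos)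
  define T where "T = max R' 0 + \<mu> * norm u"
  have T0: "0 \<le> T" using mu by (simp add: T_def)
  define R where "R = 2 * T * \<bar>B\<bar> / e + 1"
  have R1: "0 < R" using T0 e by (simp add: R_def add_nonneg_pos)
  show ?thesis
  proof (rule exI[of _ R], intro allI impI)
    fix x n a assume n1: "norm n = 1" and aA: "a \<in> A" and amin: "\<forall>y\<in>A. n \<bullet> a \<le> n \<bullet> y"
      and ea: "e \<le> n \<bullet> a" and xR: "R \<le> norm x" and xC: "x \<in> C" and xB: "n \<bullet> x \<le> B"
    have xp: "0 < norm x" using xR R1 by linarith
    define s where "s = T / norm x"
    have s0: "0 \<le> s" using T0 xp by (simp add: s_def)
    define c where "c = s *\<^sub>R x"
    have cC: "c \<in> C" using pc_basic(6)[OF pc xC s0] by (simp add: c_def)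
    have nc: "norm c = T" using xp T0 by (simp add: c_def s_def)
    define y where "y = c + \<mu> *\<^sub>R u"
    have "ball y (\<mu> * \<rho>) \<subseteq> C" unfolding y_def using cone_ball[OF pc r(2) cC mu] .
    moreover have "R' \<le> norm y"
    proof -
      have "norm c - norm (\<mu> *\<^sub>R u) \<le> norm y"
        unfolding y_def using norm_diff_ineq[of c "\<mu> *\<^sub>R u"] by simp
      then show ?thesis using nc mu by (simp add: T_def)
    qed
    ultimately have "y \<in> A" using R' by blast
    then have "n \<bullet> a \<le> n \<bullet> y" using amin by blast
    also have "n \<bullet> y = s * (n \<bullet> x) + \<mu> * (n \<bullet> u)" by (simp add: y_def c_def inner_add_right)
    also have "\<mu> * (n \<bullet> u) \<le> \<mu> * norm u"
      using mu Cauchy_Schwarz_ineq2[of n u] n1 by (intro mult_left_mono) auto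
    also have "s * (n \<bullet> x) \<le> s * \<bar>B\<bar>" using s0 xB by (intro mult_left_mono) auto
    also have "s * \<bar>B\<bar> < e / 2"
    proof -
      have "2 * T * \<bar>B\<bar> / e < norm x" using xR by (simp add: R_def)
      then have "2 * T * \<bar>B\<bar> < e * norm x" using e by (simp add: field_simps)
      then show ?thesis using xp e by (simp add: s_def field_simps)
    qed
    finally have "n \<bullet> a < e / 2 + \<mu> * norm u" by simp
    then show False using ea mue by simp
  qed
qed



lemma msum_convex:
  assumes "convex A" "convex B" shows "convex (minkowski_sum A B)"
proof -
  have "minkowski_sum A B = (\<Union>x\<in>A. \<Union>y\<in>B. {x + y})" unfolding minkowski_sum_def by auto
  then show ?thesis using convex_sums[OF assms] by simp
qed

lemma msum_sub:
  fixes C :: "'a::euclidean_space set"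
  assumes pc: "pointed_cone C" "A \<subseteq> C" "B \<subseteq> C" shows "minkowski_sum A B \<subseteq> C"
  using assms pc_basic(5)[OF pc(1)] unfolding minkowski_sum_def by blast

lemma msum_zero:
  fixes C :: "'a::euclidean_space set"
  assumes pc: "pointed_cone C" "A \<subseteq> C" "B \<subseteq> C" "0 \<notin> A"
  shows "0 \<notin> minkowski_sum A B"
proof
  assume "0 \<in> minkowski_sum A B"
  then obtain a b where ab: "a \<in> A" "b \<in> B" "0 = a + b" unfolding minkowski_sum_def by blast
  then have "-a = b" by (simp add: add_eq_0_iff)
  then have "-a \<in> C" using ab assms by auto
  then have "a = 0" using pc_basic(7)[OF pc(1)] ab assms by auto
  then show False using ab assms by simp
qed

lemma asym_sub: "asymptotic_set C A \<Longrightarrow> A \<subseteq> C" unfolding asymptotic_set_def by auto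

lemma sum_asym:
  fixes C A1 A2 :: "'a::euclidean_space set"
  assumes pc: "pointed_cone C" and as1: "asymptotic_set C A1" and as2: "asymptotic_set C A2"
    and ad1: "\<forall>a\<in>A1. \<forall>c\<in>C. a + c \<in> A1" and ad2: "\<forall>a\<in>A2. \<forall>c\<in>C. a + c \<in> A2"
  shows "asymptotic_set C (minkowski_sum A1 A2)"
proof -
  let ?S = "minkowski_sum A1 A2"
  have A1C: "A1 \<subseteq> C" and A2C: "A2 \<subseteq> C" using as1 as2 by (auto dest: asym_sub)
  have clS: "closed ?S"
    using closed_msum[OF pc _ _ A1C A2C] as1 as2 unfolding asymptotic_set_def by blast
  have cvS: "convex ?S" using msum_convex as1 as2 unfolding asymptotic_set_def by blast
  have SC: "?S \<subseteq> C" using msum_sub[OF pc A1C A2C] .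
  have S0: "0 \<notin> ?S" using msum_zero[OF pc A1C A2C] as1 unfolding asymptotic_set_def by blast
  have "A1 \<noteq> {}" using as1 unfolding asymptotic_set_def by auto
  then obtain a1 where a1: "a1 \<in> A1" by blast
  have "A2 \<noteq> {}" using as2 unfolding asymptotic_set_def by auto
  then obtain a2 where a2: "a2 \<in> A2" by blast
  have ubS: "\<not> bounded ?S"
  proof
    assume "bounded ?S"
    then have "bounded ((\<lambda>x. (- a1) + x) ` ?S)" by (rule bounded_translation)
    moreover have "A2 \<subseteq> (\<lambda>x. (- a1) + x) ` ?S"
    proof
      fix y assume "y \<in> A2"
      then have "a1 + y \<in> ?S" using a1 unfolding minkowski_sum_def by blast
      then show "y \<in> (\<lambda>x. (- a1) + x) ` ?S" by (rule rev_image_eqI) simp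
    qed
    ultimately have "bounded A2" using bounded_subset by blast
    then show False using as2 unfolding asymptotic_set_def by blast
  qed
  have intS: "interior ?S \<noteq> {}"
  proof -
    obtain p where "p \<in> interior A1" using as1 unfolding asymptotic_set_def by blast
    then obtain r where r: "0 < r" "ball p r \<subseteq> A1" using mem_interior by blast
    have "ball (p + a2) r \<subseteq> ?S"
    proof
      fix q assume "q \<in> ball (p + a2) r"
      then have "q - a2 \<in> ball p r" by (simp add: dist_norm algebra_simps)
      then have "q - a2 \<in> A1" using r by blast
      then have "(q - a2) + a2 \<in> ?S" using a2 unfolding minkowski_sum_def by blast
      then show "q \<in> ?S" by simp
    qed
    then have "p + a2 \<in> interior ?S" using r(1) mem_interior by blast
    then show ?thesis by blast
  qed
  have fr: "\<exists>R. \<forall>x\<in>frontier ?S. norm x \<ge> R \<longrightarrow> infdist x (frontier C) < \<epsilon>" if e: "0 < \<epsilon>" for \<epsilon>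
  proof -
    define B where "B = norm (a1 + a2)"
    have e4: "0 < \<epsilon> / 4" using e by simp
    obtain R1 where R1: "\<forall>x n a. norm n = 1 \<longrightarrow> a \<in> A1 \<longrightarrow> (\<forall>y\<in>A1. n \<bullet> a \<le> n \<bullet> y) \<longrightarrow> \<epsilon>/4 \<le> n \<bullet> a
     \<longrightarrow> R1 \<le> norm x \<longrightarrow> x \<in> C \<longrightarrow> n \<bullet> x \<le> B \<longrightarrow> False"
      using far_min[OF pc as1 ad1 e4, of B] by blast
    obtain R2 where R2: "\<forall>x n a. norm n = 1 \<longrightarrow> a \<in> A2 \<longrightarrow> (\<forall>y\<in>A2. n \<bullet> a \<le> n \<bullet> y) \<longrightarrow> \<epsilon>/4 \<le> n \<bullet> a
     \<longrightarrow> R2 \<le> norm x \<longrightarrow> x \<in> C \<longrightarrow> n \<bullet> x \<le> B \<longrightarrow> False"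
      using far_min[OF pc as2 ad2 e4, of B] by blast
    show ?thesis
    proof (rule exI[of _ "max R1 R2"], intro ballI impI)
      fix x assume xf: "x \<in> frontier ?S" and xR: "max R1 R2 \<le> norm x"
      show "infdist x (frontier C) < \<epsilon>"
      proof (rule ccontr)
        assume "\<not> infdist x (frontier C) < \<epsilon>"
        then have ei: "\<epsilon> \<le> infdist x (frontier C)" by simp
        have xcl: "x \<in> closure ?S" and xni: "x \<notin> interior ?S" using xf unfolding frontier_def by auto
        have xS: "x \<in> ?S" using xcl clS closure_closed by blast
        have xC: "x \<in> C" using xS SC by blast
        have bx: "ball x \<epsilon> \<subseteq> C" using infdist_ball[OF pc xC ei] .
        have xnr: "x \<notin> rel_interior ?S" using xni rel_interior_nonempty_interior[OF intS] by simp
        obtain a where a0: "a \<noteq> 0" and asup: "\<And>y. y \<in> closure ?S \<Longrightarrow> a \<bullet> x \<le> a \<bullet> y"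
          and "\<And>y. y \<in> rel_interior ?S \<Longrightarrow> a \<bullet> x < a \<bullet> y"
          using supporting_hyperplane_relative_frontier[OF cvS xcl xnr] by metis
        define n where "n = inverse (norm a) *\<^sub>R a"
        have n1: "norm n = 1" using a0 by (simp add: n_def)
        have nsup: "n \<bullet> x \<le> n \<bullet> y" if "y \<in> ?S" for y
        proof -
          have "a \<bullet> x \<le> a \<bullet> y" using asup[OF closure_subset[THEN subsetD, OF that]] .
          then show ?thesis using a0 by (simp add: n_def mult_left_mono)
        qed
        obtain y1 y2 where y: "y1 \<in> A1" "y2 \<in> A2" "x = y1 + y2" using xS unfolding minkowski_sum_def by blast
        have "x - (\<epsilon>/2) *\<^sub>R n \<in> ball x \<epsilon>" using n1 e by (simp add: dist_norm)
        then have xm: "x - (\<epsilon>/2) *\<^sub>R n \<in> C" using bx by blast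
        have nC: "0 \<le> n \<bullet> c" if "c \<in> C" for c
        proof -
          have "y1 + c \<in> A1" using ad1 y(1) that by blast
          then have "(y1 + c) + y2 \<in> ?S" using y(2) unfolding minkowski_sum_def by blast
          then have "n \<bullet> x \<le> n \<bullet> ((y1 + c) + y2)" by (rule nsup)
          then show ?thesis using y(3) by (simp add: inner_add_right)
        qed
        have "0 \<le> n \<bullet> (x - (\<epsilon>/2) *\<^sub>R n)" using nC[OF xm] .
        then have nx: "\<epsilon>/2 \<le> n \<bullet> x" using n1 by (simp add: inner_diff_right power2_norm_eq_inner[symmetric])
        have min1: "\<forall>y\<in>A1. n \<bullet> y1 \<le> n \<bullet> y"
        proof
          fix y assume "y \<in> A1"
          then have "y + y2 \<in> ?S" using y(2) unfolding minkowski_sum_def by blast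
          then have "n \<bullet> x \<le> n \<bullet> (y + y2)" by (rule nsup)
          then show "n \<bullet> y1 \<le> n \<bullet> y" using y(3) by (simp add: inner_add_right)
        qed
        have min2: "\<forall>y\<in>A2. n \<bullet> y2 \<le> n \<bullet> y"
        proof
          fix y assume "y \<in> A2"
          then have "y1 + y \<in> ?S" using y(1) unfolding minkowski_sum_def by blast
          then have "n \<bullet> x \<le> n \<bullet> (y1 + y)" by (rule nsup)
          then show "n \<bullet> y2 \<le> n \<bullet> y" using y(3) by (simp add: inner_add_right)
        qed
        have "a1 + a2 \<in> ?S" using a1 a2 unfolding minkowski_sum_def by blast
        then have "n \<bullet> x \<le> n \<bullet> (a1 + a2)" by (rule nsup)
        also have "\<dots> \<le> norm n * norm (a1 + a2)" by (rule Cauchy_Schwarz_ineq2[THEN order_trans[OF abs_ge_self]])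
        finally have nB: "n \<bullet> x \<le> B" using n1 by (simp add: B_def)
        have "\<epsilon>/4 \<le> n \<bullet> y1 \<or> \<epsilon>/4 \<le> n \<bullet> y2" using nx y(3) by (simp add: inner_add_right) linarith
        then show False
        proof
          assume h: "\<epsilon>/4 \<le> n \<bullet> y1"
          have r: "R1 \<le> norm x" using xR by simp
          show False by (rule R1[rule_format, OF n1 y(1) min1[rule_format] h r xC nB])
        next
          assume h: "\<epsilon>/4 \<le> n \<bullet> y2"
          have r: "R2 \<le> norm x" using xR by simp
          show False by (rule R2[rule_format, OF n1 y(2) min2[rule_format] h r xC nB])
        qed
      qed
    qed
  qed
  show ?thesis unfolding asymptotic_set_def
  proof (intro conjI allI impI)
    fix \<epsilon> :: real assume "0 < \<epsilon>" then show "\<exists>R. \<forall>x\<in>frontier ?S. norm x \<ge> R \<longrightarrow> infdist x (frontier C) < \<epsilon>" by (rule fr)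
  qed (use ubS clS cvS SC intS S0 in auto)
qed



lemma int_not_span:
  fixes C :: "'a::euclidean_space set"
  assumes pc: "pointed_cone C" and d: "DIM('a) \<ge> 2"
  obtains u where "u \<in> interior C" "u \<notin> span {v}"
proof -
  have "\<not> interior C \<subseteq> span {v}"
  proof
    assume h: "interior C \<subseteq> span {v}"
    have "dim (interior C) = dim (UNIV :: 'a set)"
      by (rule dim_openin) (auto simp: pc_basic(4)[OF pc])
    then have e: "dim (interior C) = DIM('a)" by simp
    have "dim (interior C) \<le> dim {v}" using dim_mono[OF h] .
    also have "\<dots> \<le> 1" by simp
    finally show False using e d by simp
  qed
  then show ?thesis using that by blast
qed

lemma geo:
  fixes C :: "'a::euclidean_space set"
  assumes pc: "pointed_cone C" and d: "DIM('a) \<ge> 2" and v: "v \<notin> C"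
  shows "\<exists>n c0. (\<forall>c\<in>C. 0 \<le> n \<bullet> c) \<and> c0 \<in> C \<and> c0 \<noteq> 0 \<and> n \<bullet> c0 = 0 \<and> n \<bullet> v < 0"
proof -
  obtain u where ui: "u \<in> interior C" and us: "u \<notin> span {v}" using int_not_span[OF pc d] by blast
  have uC: "u \<in> C" using ui interior_subset by blast
  obtain M where M: "0 \<le> M" "u + M *\<^sub>R v \<notin> C"
  proof -
    have "\<not> (\<forall>t. t \<ge> 0 \<longrightarrow> u + t *\<^sub>R v \<in> C)" using ray_limit[OF pc, of u v] v by blast
    then show ?thesis using that by blast
  qed
  have "closed_segment u (u + M *\<^sub>R v) \<inter> C \<noteq> {}" using uC by auto
  moreover have "closed_segment u (u + M *\<^sub>R v) - C \<noteq> {}" using M by auto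
  ultimately obtain c0 where c0: "c0 \<in> closed_segment u (u + M *\<^sub>R v)" "c0 \<in> frontier C"
    using connected_Int_frontier[OF connected_segment] by blast
  then obtain w where w: "0 \<le> w" "w \<le> 1" "c0 = (1 - w) *\<^sub>R u + w *\<^sub>R (u + M *\<^sub>R v)"
    unfolding closed_segment_def by blast
  define t0 where "t0 = w * M"
  have t0n: "0 \<le> t0" using w M by (simp add: t0_def)
  have c0e: "c0 = u + t0 *\<^sub>R v" using w by (simp add: t0_def algebra_simps)
  have "c0 \<in> closure C" using c0(2) by (simp add: frontier_def)
  then have c0C: "c0 \<in> C" using pc_basic(1)[OF pc] closure_closed by blast
  have t0p: "t0 \<noteq> 0"
  proof
    assume "t0 = 0"
    then have "c0 = u" using c0e by simp
    then show False using c0(2) ui by (simp add: frontier_def)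
  qed
  have c0z: "c0 \<noteq> 0"
  proof
    assume "c0 = 0"
    have "u = c0 - t0 *\<^sub>R v" using c0e by simp
    then have "u = (- t0) *\<^sub>R v" using \<open>c0 = 0\<close> by simp
    moreover have "(- t0) *\<^sub>R v \<in> span {v}" by (rule span_scale) (simp add: span_base)
    ultimately have "u \<in> span {v}" by simp
    then show False using us by simp
  qed
  have cvC: "convex C" using pc_basic(2)[OF pc] .
  have ccl: "c0 \<in> closure C" using c0C closure_subset by blast
  have cni: "c0 \<notin> rel_interior C"
    using c0(2) rel_interior_nonempty_interior[OF pc_basic(4)[OF pc]] by (simp add: frontier_def)
  obtain a where a0: "a \<noteq> 0" and asup: "\<And>y. y \<in> closure C \<Longrightarrow> a \<bullet> c0 \<le> a \<bullet> y"
    and "\<And>y. y \<in> rel_interior C \<Longrightarrow> a \<bullet> c0 < a \<bullet> y"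
    using supporting_hyperplane_relative_frontier[OF cvC ccl cni] by metis
  have asupC: "a \<bullet> c0 \<le> a \<bullet> y" if "y \<in> C" for y using asup[OF closure_subset[THEN subsetD, OF that]] .
  have "a \<bullet> c0 \<le> a \<bullet> 0" using asupC[OF pc_basic(3)[OF pc]] .
  moreover have "a \<bullet> c0 \<le> a \<bullet> (2 *\<^sub>R c0)" using asupC[OF pc_basic(6)[OF pc c0C, of 2]] by simp
  ultimately have ac0: "a \<bullet> c0 = 0" by simp
  have aC: "\<forall>c\<in>C. 0 \<le> a \<bullet> c" using asupC ac0 by simp
  obtain r where r: "0 < r" "ball u r \<subseteq> C" using ui mem_interior by blast
  have "u - (r/2 / norm a) *\<^sub>R a \<in> ball u r" using r(1) a0 by (simp add: dist_norm)
  then have "0 \<le> a \<bullet> (u - (r/2 / norm a) *\<^sub>R a)" using aC r(2) by blast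
  then have "(r/2 / norm a) * (a \<bullet> a) \<le> a \<bullet> u" by (simp add: inner_diff_right)
  moreover have "0 < (r/2 / norm a) * (a \<bullet> a)" using r(1) a0 by simp
  ultimately have au: "0 < a \<bullet> u" by linarith
  have "0 = a \<bullet> u + t0 * (a \<bullet> v)" using ac0 c0e by (simp add: inner_add_right)
  then have "t0 * (a \<bullet> v) < 0" using au by linarith
  then have "a \<bullet> v < 0" using t0n t0p by (simp add: mult_less_0_iff)
  then show ?thesis using aC c0C c0z ac0 by blast
qed

lemma not_shift:
  fixes C A :: "'a::euclidean_space set"
  assumes pc: "pointed_cone C" and d: "DIM('a) \<ge> 2" and as: "asymptotic_set C A"
    and ad: "\<forall>a\<in>A. \<forall>c\<in>C. a + c \<in> A" and v: "v \<notin> C" and sub: "translate v A \<subseteq> C"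
  shows False
proof -
  obtain n c0 where n: "\<forall>c\<in>C. 0 \<le> n \<bullet> c" "c0 \<in> C" "c0 \<noteq> 0" "n \<bullet> c0 = 0" "n \<bullet> v < 0"
    using geo[OF pc d v] by blast
  have "0 < - (n \<bullet> v)" using n(5) by simp
  then obtain y where y: "y \<in> A" "n \<bullet> y < - (n \<bullet> v)" using h_zero[OF pc as ad n(2) n(3) n(4)] by blast
  have "v + y \<in> C" using sub y(1) unfolding translate_def by blast
  then have "0 \<le> n \<bullet> (v + y)" using n(1) by blast
  then show False using y(2) by (simp add: inner_add_right)
qed

lemma shift_uniq:
  fixes C A B :: "'a::euclidean_space set"
  assumes pc: "pointed_cone C" and d: "DIM('a) \<ge> 2"
    and asA: "asymptotic_set C A" and adA: "\<forall>a\<in>A. \<forall>c\<in>C. a + c \<in> A"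
    and asB: "asymptotic_set C B" and adB: "\<forall>a\<in>B. \<forall>c\<in>C. a + c \<in> B"
    and e: "translate v A = B"
  shows "v = 0"
proof (rule ccontr)
  assume v0: "v \<noteq> 0"
  have BC: "B \<subseteq> C" and AC: "A \<subseteq> C" using asA asB by (auto dest: asym_sub)
  show False
  proof (cases "v \<in> C")
    case False
    then show False using not_shift[OF pc d asA adA False] e BC by simp
  next
    case True
    then have nv: "- v \<notin> C" using pc_basic(7)[OF pc] v0 by blast
    have "translate (- v) B = A" using e unfolding translate_def by (auto simp: image_iff)
    then show False using not_shift[OF pc d asB adB nv] AC by simp
  qed
qed



lemma ad_of:
  fixes A :: "'a::real_vector set"
  assumes "C \<subseteq> rec_cone (translate z A)"
  shows "\<forall>a\<in>A. \<forall>c\<in>C. a + c \<in> A"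
proof (intro ballI)
  fix a c assume a: "a \<in> A" and c: "c \<in> C"
  have "z + a \<in> translate z A" using a unfolding translate_def by blast
  moreover have "c \<in> rec_cone (translate z A)" using assms c by blast
  then have "\<forall>x\<in>translate z A. \<forall>t::real. t \<ge> 0 \<longrightarrow> x + t *\<^sub>R c \<in> translate z A"
    unfolding rec_cone_def by simp
  ultimately have "(z + a) + 1 *\<^sub>R c \<in> translate z A" by (meson zero_le_one)
  then obtain a' where "a' \<in> A" "z + a + c = z + a'" unfolding translate_def by auto
  then show "a + c \<in> A" by (simp add: add.assoc)
qed

lemma translate_eq:
  fixes A S :: "'a::real_vector set"
  assumes "translate z A = translate z' S"
  shows "translate (z' - z) S = A"
proof
  show "translate (z' - z) S \<subseteq> A"
  proof
    fix x assume "x \<in> translate (z' - z) S"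
    then obtain s where s: "s \<in> S" "x = (z' - z) + s" unfolding translate_def by blast
    have "z' + s \<in> translate z A" using assms s(1) unfolding translate_def by blast
    then obtain a where a: "a \<in> A" "z' + s = z + a" unfolding translate_def by blast
    then have "x = a" using s(2) by (simp add: algebra_simps)
    then show "x \<in> A" using a by simp
  qed
next
  show "A \<subseteq> translate (z' - z) S"
  proof
    fix x assume x: "x \<in> A"
    have "z + x \<in> translate z' S" using assms x unfolding translate_def by blast
    then obtain s where s: "s \<in> S" "z + x = z' + s" unfolding translate_def by blast
    then have "x = (z' - z) + s" by (simp add: algebra_simps)
    then show "x \<in> translate (z' - z) S" using s(1) unfolding translate_def by blast
  qed
qed

lemma msum_translate:
  fixes A1 A2 :: "'a::real_vector set"
  shows "minkowski_sum (translate z1 A1) (translate z2 A2) = translate (z1 + z2) (minkowski_sum A1 A2)"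
proof
  show "minkowski_sum (translate z1 A1) (translate z2 A2) \<subseteq> translate (z1 + z2) (minkowski_sum A1 A2)"
  proof
    fix x assume "x \<in> minkowski_sum (translate z1 A1) (translate z2 A2)"
    then obtain a1 a2 where a: "a1 \<in> A1" "a2 \<in> A2" "x = (z1 + a1) + (z2 + a2)"
      unfolding minkowski_sum_def translate_def by blast
    then have "x = (z1 + z2) + (a1 + a2)" by (simp add: algebra_simps)
    moreover have "a1 + a2 \<in> minkowski_sum A1 A2" using a unfolding minkowski_sum_def by blast
    ultimately show "x \<in> translate (z1 + z2) (minkowski_sum A1 A2)" unfolding translate_def by blast
  qed
next
  show "translate (z1 + z2) (minkowski_sum A1 A2) \<subseteq> minkowski_sum (translate z1 A1) (translate z2 A2)"
  proof
    fix x assume "x \<in> translate (z1 + z2) (minkowski_sum A1 A2)"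
    then obtain a1 a2 where a: "a1 \<in> A1" "a2 \<in> A2" "x = (z1 + z2) + (a1 + a2)"
      unfolding minkowski_sum_def translate_def by blast
    then have "x = (z1 + a1) + (z2 + a2)" by (simp add: algebra_simps)
    moreover have "z1 + a1 \<in> translate z1 A1" "z2 + a2 \<in> translate z2 A2"
      using a unfolding translate_def by auto
    ultimately show "x \<in> minkowski_sum (translate z1 A1) (translate z2 A2)"
      unfolding minkowski_sum_def by blast
  qed
qed

lemma translate_sub:
  fixes C :: "'a::euclidean_space set"
  assumes pc: "pointed_cone C" "z \<in> C" "A \<subseteq> C" shows "translate z A \<subseteq> C"
  using assms pc_basic(5)[OF pc(1)] unfolding translate_def by blast

theorem corollary3p2:
  fixes C E F A1 A2 :: "'a::euclidean_space set" and z1 z2 :: 'a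
  assumes "DIM('a) \<ge> 2"
    and "pointed_cone C"
    and "nondeg_pseudo_cone C E" and "nondeg_pseudo_cone C F"
    and "z1 \<in> C" and "asymptotic_set C A1" and "E = translate z1 A1"
    and "z2 \<in> C" and "asymptotic_set C A2" and "F = translate z2 A2"
  shows "minkowski_sum E F = translate (z1 + z2) (minkowski_sum A1 A2)
    \<and> asymptotic_set C (minkowski_sum A1 A2)
    \<and> nondeg_pseudo_cone C (minkowski_sum E F)
    \<and> starting_point C (minkowski_sum E F) = z1 + z2"
proof -
  note d = assms(1) and pc = assms(2)
  have pE: "pseudo_cone C E" and pF: "pseudo_cone C F"
    using assms(3,4) unfolding nondeg_pseudo_cone_def by auto
  have recE: "rec_cone E = C" and recF: "rec_cone F = C" using pE pF unfolding pseudo_cone_def by auto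
  have ad1: "\<forall>a\<in>A1. \<forall>c\<in>C. a + c \<in> A1" using ad_of[of C z1 A1] recE assms(7) by simp
  have ad2: "\<forall>a\<in>A2. \<forall>c\<in>C. a + c \<in> A2" using ad_of[of C z2 A2] recF assms(10) by simp
  let ?S = "minkowski_sum A1 A2"
  let ?EF = "minkowski_sum E F"
  have eq: "?EF = translate (z1 + z2) ?S" using msum_translate assms(7,10) by simp
  have asS: "asymptotic_set C ?S" using sum_asym[OF pc assms(6) assms(9) ad1 ad2] .
  have z12: "z1 + z2 \<in> C" using pc_basic(5)[OF pc assms(5,8)] .
  have EC: "E \<subseteq> C" using translate_sub[OF pc assms(5) asym_sub[OF assms(6)]] assms(7) by simp
  have FC: "F \<subseteq> C" using translate_sub[OF pc assms(8) asym_sub[OF assms(9)]] assms(10) by simp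
  have EFC: "?EF \<subseteq> C" using msum_sub[OF pc EC FC] .
  have pEF: "pseudo_cone C ?EF"
    unfolding pseudo_cone_def
  proof (intro conjI)
    show "?EF \<noteq> {}" using pE pF unfolding pseudo_cone_def minkowski_sum_def by blast
    show "closed ?EF" using closed_msum[OF pc _ _ EC FC] pE pF unfolding pseudo_cone_def by blast
    show "convex ?EF" using msum_convex pE pF unfolding pseudo_cone_def by blast
    show "0 \<notin> ?EF" using msum_zero[OF pc EC FC] pE unfolding pseudo_cone_def by blast
    show "\<forall>x\<in>?EF. \<forall>l::real. l \<ge> 1 \<longrightarrow> l *\<^sub>R x \<in> ?EF"
    proof (intro ballI allI impI)
      fix x and l :: real assume x: "x \<in> ?EF" and l: "l \<ge> 1"
      then obtain a b where ab: "a \<in> E" "b \<in> F" "x = a + b" unfolding minkowski_sum_def by blast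
      have "l *\<^sub>R a \<in> E" "l *\<^sub>R b \<in> F" using pE pF ab l unfolding pseudo_cone_def by auto
      moreover have "l *\<^sub>R x = l *\<^sub>R a + l *\<^sub>R b" using ab by (simp add: scaleR_add_right)
      ultimately show "l *\<^sub>R x \<in> ?EF" unfolding minkowski_sum_def by blast
    qed
    show "rec_cone ?EF = C"
    proof
      show "C \<subseteq> rec_cone ?EF"
      proof
        fix c assume c: "c \<in> C"
        show "c \<in> rec_cone ?EF" unfolding rec_cone_def
        proof (intro CollectI ballI allI impI)
          fix x and t :: real assume x: "x \<in> ?EF" and t: "0 \<le> t"
          then obtain a b where ab: "a \<in> E" "b \<in> F" "x = a + b" unfolding minkowski_sum_def by blast
          have "\<forall>x\<in>E. \<forall>t::real. t \<ge> 0 \<longrightarrow> x + t *\<^sub>R c \<in> E" using recE c unfolding rec_cone_def by blast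
          then have "a + t *\<^sub>R c \<in> E" using ab(1) t by blast
          moreover have "x + t *\<^sub>R c = (a + t *\<^sub>R c) + b" using ab by (simp add: algebra_simps)
          ultimately show "x + t *\<^sub>R c \<in> ?EF" using ab(2) unfolding minkowski_sum_def by blast
        qed
      qed
      show "rec_cone ?EF \<subseteq> C"
      proof
        fix dd assume dd: "dd \<in> rec_cone ?EF"
        obtain x where x: "x \<in> ?EF" using \<open>?EF \<noteq> {}\<close> by blast
        have "\<forall>x\<in>?EF. \<forall>t::real. t \<ge> 0 \<longrightarrow> x + t *\<^sub>R dd \<in> ?EF" using dd unfolding rec_cone_def by simp
        then have "\<And>t. t \<ge> 0 \<Longrightarrow> x + t *\<^sub>R dd \<in> C" using x EFC by blast
        then show "dd \<in> C" by (rule ray_limit[OF pc])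
      qed
    qed
  qed
  have ndEF: "nondeg_pseudo_cone C ?EF"
    unfolding nondeg_pseudo_cone_def using pEF z12 asS eq by blast
  have recEF: "rec_cone ?EF = C" using pEF unfolding pseudo_cone_def by blast
  have adS: "\<forall>a\<in>?S. \<forall>c\<in>C. a + c \<in> ?S" using ad_of[of C "z1 + z2" ?S] recEF eq by simp
  have sp: "starting_point C ?EF = z1 + z2"
    unfolding starting_point_def
  proof (rule the_equality)
    show "z1 + z2 \<in> C \<and> (\<exists>A. asymptotic_set C A \<and> ?EF = translate (z1 + z2) A)"
      using z12 asS eq by blast
  next
    fix z assume "z \<in> C \<and> (\<exists>A. asymptotic_set C A \<and> ?EF = translate z A)"
    then obtain A where A: "asymptotic_set C A" "?EF = translate z A" by blast
    have adA: "\<forall>a\<in>A. \<forall>c\<in>C. a + c \<in> A" using ad_of[of C z A] recEF A(2) by simp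
    have "translate (z1 + z2 - z) ?S = A" using translate_eq[of z A "z1 + z2" ?S] A(2) eq by simp
    then have "z1 + z2 - z = 0" using shift_uniq[OF pc d asS adS A(1) adA] by blast
    then show "z = z1 + z2" by simp
  qed
  show ?thesis using eq asS ndEF sp by blast
qed

end
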